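(* Let $\mathcal M^\star\subset\mathbb R^D$ be a closed embedded submanifold with nearest-point projection $\pi^\star$, let $0<\tau<t_0$, and suppose for some $r<\mathrm{reach}(\mathcal M^\star)$ that $\hat s(x,t)=-\frac{x-\pi^\star(x)}{t}+\frac{e(x,t)}{t}$ for all $t\in[\tau,t_0]$, $x\in\mathcal T_r(\mathcal M^\star)$, with $\varepsilon:=\sup_{t\in[\tau,t_0],x\in\mathcal T_r(\mathcal M^\star)}\|e(x,t)\|$. Let $\bar X_t$ solve $\mathrm d\bar X_t=\frac12\hat s(\bar X_t,t_0-t)\,\mathrm dt$ for $t\in[0,t_0-\tau]$, set $a_0:=\frac12\operatorname{dist}^2(\bar X_0,\mathcal M^\star)$, and suppose $\sqrt{a_0}\ge\varepsilon$. Then \[\|\bar X_{t_0-\tau}-\bar X_0\|\le\operatorname{dist}(\bar X_0,\mathcal M^\star)+\mathcal O\!\Big(\varepsilon\ln\frac{t_0}{\tau}\Big).\]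
   Context: Reach: largest $r$ such that every point at distance $<r$ from $\mathcal M^\star$ has a unique nearest point. $\mathcal T_r(\mathcal M):=\{x:\operatorname{dist}(x,\mathcal M)<r\}$. *)

theory Defs
  imports "HOL-Analysis.Analysis"
begin

fun Ck_on :: "nat \<Rightarrow> (real^'n) set \<Rightarrow> (real^'n \<Rightarrow> real) \<Rightarrow> bool" where
  "Ck_on 0 U f = continuous_on U f"
| "Ck_on (Suc k) U f = (f differentiable_on U \<and>
      (\<forall>i. Ck_on k U (\<lambda>x. frechet_derivative f (at x) (axis i 1))))"

definition smooth_on :: "(real^'n) set \<Rightarrow> (real^'n \<Rightarrow> real^'m) \<Rightarrow> bool" where
  "smooth_on U f = (\<forall>k j. Ck_on k U (\<lambda>x. f x $ j))"

definition embedded_submanifold :: "(real^'n) set \<Rightarrow> bool" where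
  "embedded_submanifold M = (\<exists>d. \<forall>p\<in>M. \<exists>U V (\<phi> :: real^'n \<Rightarrow> real^'n) (\<psi> :: real^'n \<Rightarrow> real^'n) S.
      open U \<and> p \<in> U \<and> open V \<and> \<phi> ` U = V \<and>
      (\<forall>x\<in>U. \<psi> (\<phi> x) = x) \<and> (\<forall>y\<in>V. \<phi> (\<psi> y) = y) \<and>
      smooth_on U \<phi> \<and> smooth_on V \<psi> \<and>
      subspace S \<and> dim S = d \<and> \<phi> ` (M \<inter> U) = V \<inter> S)"

text \<open>Nearest-point projection (meaningful where the nearest point is unique).\<close>
definition nearest_proj :: "(real^'n) set \<Rightarrow> real^'n \<Rightarrow> real^'n" where
  "nearest_proj M x = (THE y. y \<in> M \<and> dist x y = infdist x M)"

definition reach :: "(real^'n) set \<Rightarrow> ereal" where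
  "reach M = Sup {ereal r | r. r \<ge> 0 \<and>
      (\<forall>x. infdist x M < r \<longrightarrow> (\<exists>!y. y \<in> M \<and> dist x y = infdist x M))}"

definition tube :: "real \<Rightarrow> (real^'n) set \<Rightarrow> (real^'n) set" where
  "tube r M = {x. infdist x M < r}"

end

theory Submission
  imports Defs
begin

lemma nd1: "0 < s \<Longrightarrow> norm (a /\<^sub>R s) = norm (a::'a::real_normed_vector) / (s::real)"
  by (simp add: divide_inverse_commute)

lemma first_exit:
  fixes f :: "real \<Rightarrow> real" and a b :: real
  assumes ab: "a \<le> b" and cont: "continuous_on {a..b} f" and fa: "f a \<le> 0"
    and step: "\<And>x. a \<le> x \<Longrightarrow> x < b \<Longrightarrow> (\<forall>y\<in>{a..x}. f y \<le> 0) \<Longrightarrow>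
               \<exists>h>0. \<forall>y. x < y \<and> y < x + h \<longrightarrow> f y \<le> 0"
  shows "\<forall>x\<in>{a..b}. f x \<le> 0"
proof (rule ccontr)
  assume "\<not> ?thesis"
  then obtain x0 where x0: "x0 \<in> {a..b}" "f x0 > 0" by force
  define K where "K = {x\<in>{a..b}. f x > 0}"
  have Kne: "K \<noteq> {}" using x0 K_def by blast
  have Kbdd: "bdd_below K" unfolding K_def by (rule bdd_belowI[of _ a]) auto
  define c where "c = Inf K"
  have ca: "a \<le> c" unfolding c_def using Kne by (intro cInf_greatest) (auto simp: K_def)
  have cx0: "c \<le> x0" unfolding c_def using Kbdd x0 by (intro cInf_lower) (auto simp: K_def)
  have below: "f y \<le> 0" if "a \<le> y" "y < c" for y
  proof (rule ccontr)
    assume "\<not> f y \<le> 0"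
    then have "y \<in> K" using that cx0 x0 by (auto simp: K_def)
    then have "c \<le> y" unfolding c_def using Kbdd by (intro cInf_lower)
    then show False using that by simp
  qed
  have fc: "f c \<le> 0"
  proof (rule ccontr)
    assume fc0: "\<not> f c \<le> 0"
    then have "c \<noteq> a" using fa by auto
    with ca have cgt: "c > a" by simp
    have "c \<in> {a..b}" using ca cx0 x0 by auto
    with cont fc0 obtain d where d: "d > 0" "\<forall>x'\<in>{a..b}. dist x' c < d \<longrightarrow> dist (f x') (f c) < f c"
      unfolding continuous_on_iff by (metis not_le)
    define y where "y = max a (c - d/2)"
    have y: "a \<le> y" "y < c" "y \<in> {a..b}" "dist y c < d" using d cgt cx0 x0
      by (auto simp: y_def dist_real_def)
    then have "dist (f y) (f c) < f c" using d by blast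
    then have "f y > 0" by (auto simp: dist_real_def)
    with below y show False by force
  qed
  have "c \<noteq> x0" using fc x0 by auto
  then have cb: "c < b" using cx0 x0 by auto
  have "\<forall>y\<in>{a..c}. f y \<le> 0" using below fc by force
  then obtain h where h: "h > 0" "\<forall>y. c < y \<and> y < c + h \<longrightarrow> f y \<le> 0"
    using step[OF ca cb] by blast
  have "Inf K < c + h" using h c_def by simp
  then obtain k where k: "k \<in> K" "k < c + h" using cInf_less_iff[OF Kne Kbdd] by blast
  have "c \<le> k" unfolding c_def using Kbdd k by (intro cInf_lower)
  moreover have "k \<noteq> c" using k fc by (auto simp: K_def)
  ultimately have "c < k" by simp
  with h k show False by (auto simp: K_def)
qed

lemma deriv_lower:
  fixes f :: "real \<Rightarrow> real"
  assumes "(f has_real_derivative f') (at x)" "\<eta> > 0"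
  shows "\<exists>h>0. \<forall>y. x < y \<and> y < x + h \<longrightarrow> f y \<ge> f x + (y - x) * (f' - \<eta>)"
proof -
  from assms(1) have "(f has_derivative (\<lambda>z. z * f')) (at x within UNIV)"
  proof -
    have "(\<lambda>z. z * f') = (*) f'" by (auto simp: mult.commute)
    then show ?thesis using assms(1) by (simp add: has_field_derivative_def)
  qed
  then obtain d where d: "d > 0" "\<forall>y. norm (y - x) < d \<longrightarrow> norm (f y - f x - (y - x) * f') \<le> \<eta> * norm (y - x)"
    unfolding has_derivative_within_alt using assms(2) by blast
  show ?thesis
  proof (intro exI[of _ d] conjI allI impI)
    fix y assume y: "x < y \<and> y < x + d"
    then have "\<bar>f y - f x - (y - x) * f'\<bar> \<le> \<eta> * (y - x)"
      using d(2)[rule_format, of y] y by simp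
    then show "f y \<ge> f x + (y - x) * (f' - \<eta>)" by (auto simp: algebra_simps abs_le_iff)
  qed (use d in auto)
qed

lemma vderiv_bound:
  fixes X :: "real \<Rightarrow> 'a::real_normed_vector"
  assumes "(X has_vector_derivative V) (at t within S)" "\<eta> > 0"
  shows "\<exists>h>0. \<forall>y\<in>S. \<bar>y - t\<bar> < h \<longrightarrow> norm (X y - X t - (y - t) *\<^sub>R V) \<le> \<eta> * \<bar>y - t\<bar>"
  using assms unfolding has_vector_derivative_def has_derivative_within_alt by auto

lemma lin_deriv: "((\<lambda>y. t0 - y) has_real_derivative (- 1)) (at t)"
proof -
  have "((\<lambda>y. t0 - y) has_real_derivative (0 - 1)) (at t)"
    by (intro DERIV_diff DERIV_const DERIV_ident)
  then show ?thesis by simp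
qed

lemma sqrt_deriv: assumes "t < t0" shows "((\<lambda>y. sqrt (t0 - y)) has_real_derivative (- 1 / (2 * sqrt (t0 - t)))) (at t)"
proof -
  have p: "0 < t0 - t" using assms by simp
  have "((\<lambda>y. sqrt (t0 - y)) has_real_derivative (inverse (sqrt (t0 - t)) / 2 * (- 1))) (at t)"
    using DERIV_chain2[OF DERIV_real_sqrt[OF p] lin_deriv] .
  then show ?thesis by (simp add: inverse_eq_divide mult.commute)
qed
lemma ln_deriv: assumes "t < t0" shows "((\<lambda>y. ln (t0 - y)) has_real_derivative (- 1 / (t0 - t))) (at t)"
proof -
  have p: "0 < t0 - t" using assms by simp
  have "((\<lambda>y. ln (t0 - y)) has_real_derivative (inverse (t0 - t) * (- 1))) (at t)"
    using DERIV_chain2[OF DERIV_ln[OF p] lin_deriv] .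
  then show ?thesis by (simp add: inverse_eq_divide)
qed

lemma B_deriv:
  assumes "t < t0" "0 < t0"
  shows "((\<lambda>y. \<epsilon> + (d0 - \<epsilon>) * sqrt (t0 - y) / sqrt t0) has_real_derivative
     ((\<epsilon> - d0) / (2 * sqrt t0 * sqrt (t0 - t)))) (at t)"
proof -
  have "((\<lambda>y. \<epsilon> + (d0 - \<epsilon>) * sqrt (t0 - y) / sqrt t0) has_real_derivative
     (0 + (d0 - \<epsilon>) * (- 1 / (2 * sqrt (t0 - t))) / sqrt t0)) (at t)"
    by (intro DERIV_add DERIV_const DERIV_cdivide DERIV_cmult sqrt_deriv assms)
  moreover have "0 + (d0 - \<epsilon>) * (- 1 / (2 * sqrt (t0 - t))) / sqrt t0 = (\<epsilon> - d0) / (2 * sqrt t0 * sqrt (t0 - t))"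
    using assms by (simp add: field_simps)
  ultimately show ?thesis by (simp only:)
qed

lemma A_deriv:
  assumes "t < t0" "0 < t0"
  shows "((\<lambda>y. (d0 - \<epsilon>) * (1 - sqrt (t0 - y) / sqrt t0) + \<epsilon> * (ln t0 - ln (t0 - y))) has_real_derivative
     ((d0 - \<epsilon>) / (2 * sqrt t0 * sqrt (t0 - t)) + \<epsilon> / (t0 - t))) (at t)"
proof -
  have "((\<lambda>y. (d0 - \<epsilon>) * (1 - sqrt (t0 - y) / sqrt t0) + \<epsilon> * (ln t0 - ln (t0 - y))) has_real_derivative
     ((d0 - \<epsilon>) * (0 - (- 1 / (2 * sqrt (t0 - t))) / sqrt t0) + \<epsilon> * (0 - (- 1 / (t0 - t))))) (at t)"
    by (intro DERIV_add DERIV_diff DERIV_const DERIV_cdivide DERIV_cmult sqrt_deriv ln_deriv assms)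
  then show ?thesis by (simp add: field_simps)
qed
lemma main_bound:
  fixes M :: "(real^'n) set" and r \<tau> t0 :: real
    and shat e :: "real^'n \<Rightarrow> real \<Rightarrow> real^'n" and X :: "real \<Rightarrow> real^'n"
  assumes tau: "0 < \<tau>" "\<tau> < t0" and reach: "ereal r < reach M"
    and shat: "\<forall>t\<in>{\<tau>..t0}. \<forall>x\<in>tube r M. shat x t = - ((x - nearest_proj M x) /\<^sub>R t) + e x t /\<^sub>R t"
    and bdd: "bdd_above ((\<lambda>(x, t). norm (e x t)) ` (tube r M \<times> {\<tau>..t0}))"
    and ode: "\<forall>t\<in>{0..t0 - \<tau>}. (X has_vector_derivative ((1/2) *\<^sub>R shat (X t) (t0 - t))) (at t within {0..t0 - \<tau>})"
    and X0: "X 0 \<in> tube r M"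
    and small: "sqrt ((1/2) * (infdist (X 0) M)\<^sup>2) \<ge> (SUP (x, t) \<in> tube r M \<times> {\<tau>..t0}. norm (e x t))"
  shows "norm (X (t0 - \<tau>) - X 0) \<le> infdist (X 0) M + 1 * ((SUP (x, t) \<in> tube r M \<times> {\<tau>..t0}. norm (e x t)) * ln (t0 / \<tau>))"
proof -
  define \<epsilon> where "\<epsilon> = (SUP (x, t) \<in> tube r M \<times> {\<tau>..t0}. norm (e x t))"
  define d0 where "d0 = infdist (X 0) M"
  define T where "T = t0 - \<tau>"
  have T0: "0 < T" using tau T_def by simp
  have t0pos: "0 < t0" using tau by simp
  have sqt0: "0 < sqrt t0" using t0pos by simp
  have ebound: "norm (e x t) \<le> \<epsilon>" if "x \<in> tube r M" "t \<in> {\<tau>..t0}" for x t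
  proof -
    have "(\<lambda>(x, t). norm (e x t)) (x, t) \<le> \<epsilon>" unfolding \<epsilon>_def
      by (rule cSUP_upper[OF _ bdd]) (use that in auto)
    then show ?thesis by simp
  qed
  have eps0: "0 \<le> \<epsilon>"
  proof -
    have "norm (e (X 0) \<tau>) \<le> \<epsilon>" using ebound[OF X0, of \<tau>] tau by simp
    then show ?thesis using norm_ge_zero order_trans by blast
  qed
  have d0nn: "0 \<le> d0" unfolding d0_def by (rule infdist_nonneg)
  have d0r: "d0 < r" using X0 unfolding tube_def d0_def by simp
  have "sqrt ((1/2) * d0^2) \<le> sqrt (d0^2)" by (intro real_sqrt_le_mono) simp
  then have epsd0: "\<epsilon> \<le> d0" using small d0nn unfolding \<epsilon>_def d0_def by simp
  obtain r' where r': "r < r'" "\<forall>x. infdist x M < r' \<longrightarrow> (\<exists>!y. y \<in> M \<and> dist x y = infdist x M)"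
  proof -
    from reach obtain z where "z \<in> {ereal r' | r'. r' \<ge> 0 \<and> (\<forall>x. infdist x M < r' \<longrightarrow> (\<exists>!y. y \<in> M \<and> dist x y = infdist x M))}" "ereal r < z"
      unfolding reach_def less_Sup_iff by blast
    then show ?thesis using that by auto
  qed
  have proj: "nearest_proj M x \<in> M \<and> dist x (nearest_proj M x) = infdist x M" if "x \<in> tube r M" for x
  proof -
    have "infdist x M < r'" using that r' unfolding tube_def by simp
    then have "\<exists>!y. y \<in> M \<and> dist x y = infdist x M" using r' by blast
    then show ?thesis unfolding nearest_proj_def by (rule theI')
  qed
  define B where "B y = \<epsilon> + (d0 - \<epsilon>) * sqrt (t0 - y) / sqrt t0" for y
  define A where "A y = (d0 - \<epsilon>) * (1 - sqrt (t0 - y) / sqrt t0) + \<epsilon> * (ln t0 - ln (t0 - y))" for y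
  define K where "K = 1 + T / \<tau>"
  have Bd0: "B y \<le> d0" if "0 \<le> y" "y < t0" for y
  proof -
    have "sqrt (t0 - y) \<le> sqrt t0" using that by simp
    then have "sqrt (t0 - y) / sqrt t0 \<le> 1" using sqt0 by simp
    then have "(d0 - \<epsilon>) * (sqrt (t0 - y) / sqrt t0) \<le> (d0 - \<epsilon>) * 1" using epsd0 by (intro mult_left_mono) auto
    then show ?thesis unfolding B_def by simp
  qed
  have Xcont: "continuous_on {0..T} X"
    using ode unfolding T_def
    by (auto simp: continuous_on_eq_continuous_within intro: has_vector_derivative_continuous)
  have key: "norm (X T - X 0) \<le> A T + \<eta> * K * T" if eta: "0 < \<eta>" "\<eta> * T < r - d0" for \<eta>
  proof -
    define f where "f y = max (infdist (X y) M - B y - \<eta> * y) (norm (X y - X 0) - A y - \<eta> * K * y)" for y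
    have fcont: "continuous_on {0..T} f"
      unfolding f_def B_def A_def using T_def tau
      by (intro continuous_intros Xcont) auto
    have f0: "f 0 \<le> 0" using sqt0 unfolding f_def B_def A_def d0_def by simp
    have "\<forall>x\<in>{0..T}. f x \<le> 0"
    proof (rule first_exit[OF _ fcont f0])
      show "0 \<le> T" using T0 by simp
    next
      fix t assume t: "0 \<le> t" "t < T" and hyp: "\<forall>y\<in>{0..t}. f y \<le> 0"
      then have "f t \<le> 0" by auto
      then have Dt: "infdist (X t) M \<le> B t + \<eta> * t" and Nt: "norm (X t - X 0) \<le> A t + \<eta> * K * t"
        unfolding f_def by auto
      define s where "s = t0 - t"
      have s: "\<tau> < s" "s \<le> t0" using t T_def s_def by auto
      have s0: "0 < s" using s tau by simp
      have tt0: "t < t0" using t T_def tau by simp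
      have "B t \<le> d0" using Bd0 t tt0 by simp
      moreover have "\<eta> * t \<le> \<eta> * T" using t eta by simp
      ultimately have "infdist (X t) M < r" using Dt eta by linarith
      then have Xt: "X t \<in> tube r M" unfolding tube_def by simp
      define dt where "dt = infdist (X t) M"
      define p where "p = nearest_proj M (X t)"
      have p: "p \<in> M" "dist (X t) p = dt" using proj[OF Xt] p_def dt_def by auto
      define E where "E = e (X t) s"
      have E: "norm E \<le> \<epsilon>" using ebound[OF Xt, of s] s E_def by simp
      define V where "V = (1/2) *\<^sub>R shat (X t) s"
      have V: "V = (1/2) *\<^sub>R (- ((X t - p) /\<^sub>R s) + E /\<^sub>R s)"
        using shat Xt s unfolding V_def p_def E_def by auto
      have tT: "t \<in> {0..T}" using t by simp
      have dX: "(X has_vector_derivative V) (at t within {0..T})"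
        using ode tT unfolding V_def s_def T_def by auto
      have eta4: "\<eta> / 4 > 0" using eta by simp
      obtain h1 where h1: "h1 > 0" "\<forall>y\<in>{0..T}. \<bar>y - t\<bar> < h1 \<longrightarrow> norm (X y - X t - (y - t) *\<^sub>R V) \<le> \<eta> / 4 * \<bar>y - t\<bar>"
        using vderiv_bound[OF dX eta4] by blast
      define B' where "B' = (\<epsilon> - d0) / (2 * sqrt t0 * sqrt (t0 - t))"
      define A' where "A' = (d0 - \<epsilon>) / (2 * sqrt t0 * sqrt (t0 - t)) + \<epsilon> / (t0 - t)"
      have dB: "(B has_real_derivative B') (at t)"
        unfolding B_def B'_def by (rule B_deriv[OF tt0 t0pos])
      have dA: "(A has_real_derivative A') (at t)"
        unfolding A_def A'_def by (rule A_deriv[OF tt0 t0pos])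
      obtain h2 where h2: "h2 > 0" "\<forall>y. t < y \<and> y < t + h2 \<longrightarrow> B y \<ge> B t + (y - t) * (B' - \<eta> / 4)"
        using deriv_lower[OF dB eta4] by blast
      obtain h3 where h3: "h3 > 0" "\<forall>y. t < y \<and> y < t + h3 \<longrightarrow> A y \<ge> A t + (y - t) * (A' - \<eta> / 4)"
        using deriv_lower[OF dA eta4] by blast
      have ss: "sqrt s * sqrt s = s" using s0 by simp
      have sqs: "0 < sqrt s" using s0 by simp
      have ss2: "sqrt s * (sqrt s * z) = s * z" for z using ss by (metis mult.assoc)
      have Bslope: "B' = (\<epsilon> - B t) / (2 * s)"
        unfolding B'_def B_def s_def[symmetric] using ss sqs sqt0 s0 by (simp add: field_simps ss2)
      have Aslope: "A' = (B t + \<epsilon>) / (2 * s)"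
        unfolding A'_def B_def s_def[symmetric] using ss sqs sqt0 s0 by (simp add: field_simps ss2)
      have tK: "t / (2 * s) \<le> K - 1/2"
      proof -
        have "t / (2 * s) \<le> T / (2 * \<tau>)" using t s tau by (intro frac_le) auto
        also have "\<dots> \<le> T / \<tau>" using T0 tau by (simp add: field_simps)
        finally show ?thesis unfolding K_def by simp
      qed
      define h where "h = min (min h1 h2) (min h3 (min (T - t) s))"
      show "\<exists>h>0. \<forall>y. t < y \<and> y < t + h \<longrightarrow> f y \<le> 0"
      proof (intro exI[of _ h] conjI allI impI)
        show "0 < h" using h1 h2 h3 t s0 unfolding h_def by auto
      next
        fix y assume y: "t < y \<and> y < t + h"
        define u where "u = y - t"
        have u0: "0 < u" using y u_def by simp
        have yT: "y \<in> {0..T}" using y t unfolding h_def by auto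
        have yh1: "\<bar>y - t\<bar> < h1" using y unfolding h_def by auto
        have Rem0: "norm (X y - X t - (y - t) *\<^sub>R V) \<le> \<eta> / 4 * \<bar>y - t\<bar>" using h1(2) yT yh1 by blast
        have Rem: "norm (X y - X t - u *\<^sub>R V) \<le> \<eta> / 4 * u" using Rem0 y unfolding u_def by simp
        have By: "B y \<ge> B t + u * (B' - \<eta> / 4)" using h2 y u_def unfolding h_def by auto
        have Ay: "A y \<ge> A t + u * (A' - \<eta> / 4)" using h3 y u_def unfolding h_def by auto
        have us: "u < s" using y u_def unfolding h_def by auto
        define lam where "lam = u / (2 * s)"
        have lam: "0 \<le> lam" "lam \<le> 1" using u0 us s0 unfolding lam_def by auto
        have uV: "u *\<^sub>R V = lam *\<^sub>R (p - X t) + lam *\<^sub>R E"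
        proof -
          have iv: "u * inverse s / 2 = u / (s * 2)" by (simp add: field_simps)
          show ?thesis unfolding V lam_def using s0 by (simp add: scaleR_add_right scaleR_diff_right algebra_simps iv)
        qed
        have normR: "norm (X t + u *\<^sub>R V - p) \<le> (1 - lam) * dt + lam * \<epsilon>"
        proof -
          have "X t + u *\<^sub>R V - p = (1 - lam) *\<^sub>R (X t - p) + lam *\<^sub>R E"
            unfolding uV by (simp add: algebra_simps)
          also have "norm \<dots> \<le> norm ((1 - lam) *\<^sub>R (X t - p)) + norm (lam *\<^sub>R E)"
            by (rule norm_triangle_ineq)
          also have "\<dots> = (1 - lam) * dt + lam * norm E"
            using lam p(2) by (simp add: dist_norm)
          also have "\<dots> \<le> (1 - lam) * dt + lam * \<epsilon>"
            using lam E by (simp add: mult_left_mono)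
          finally show ?thesis .
        qed
        have dy: "infdist (X y) M \<le> \<eta> / 4 * u + ((1 - lam) * dt + lam * \<epsilon>)"
        proof -
          have "infdist (X y) M \<le> dist (X y) p" by (rule infdist_le[OF p(1)])
          also have "\<dots> = norm ((X y - X t - u *\<^sub>R V) + (X t + u *\<^sub>R V - p))"
            by (simp add: dist_norm algebra_simps)
          also have "\<dots> \<le> norm (X y - X t - u *\<^sub>R V) + norm (X t + u *\<^sub>R V - p)"
            by (rule norm_triangle_ineq)
          finally show ?thesis using Rem normR by linarith
        qed
        have uB: "u * B' = lam * \<epsilon> - lam * B t"
          unfolding Bslope lam_def using s0 by (simp add: field_simps)
        have uA: "u * A' = lam * B t + lam * \<epsilon>"
          unfolding Aslope lam_def using s0 by (simp add: field_simps)
        have P1: "(1 - lam) * dt \<le> (1 - lam) * (B t + \<eta> * t)"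
          by (rule mult_left_mono) (use Dt lam dt_def in auto)
        have P2: "0 \<le> lam * (\<eta> * t)" using lam eta t by simp
        have P3: "lam * dt \<le> lam * (B t + \<eta> * t)"
          by (rule mult_left_mono) (use Dt lam dt_def in auto)
        have P4: "lam * (\<eta> * t) \<le> u * \<eta> * (K - 1/2)"
        proof -
          have "lam * (\<eta> * t) = u * \<eta> * (t / (2 * s))" unfolding lam_def by simp
          also have "\<dots> \<le> u * \<eta> * (K - 1/2)" using tK u0 eta by (intro mult_left_mono) auto
          finally show ?thesis .
        qed
        have nV: "u * norm V \<le> lam * dt + lam * \<epsilon>"
        proof -
          have "norm V \<le> (1/2) * (norm (X t - p) / s + norm E / s)"
          proof -
            have n1: "norm (- ((X t - p) /\<^sub>R s) + E /\<^sub>R s) \<le> norm ((X t - p) /\<^sub>R s) + norm (E /\<^sub>R s)"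
              using norm_triangle_ineq[of "- ((X t - p) /\<^sub>R s)" "E /\<^sub>R s"] by simp
            have n2: "norm ((X t - p) /\<^sub>R s) = norm (X t - p) / s" "norm (E /\<^sub>R s) = norm E / s"
              by (rule nd1[OF s0])+
            show ?thesis unfolding V using n1 n2 by simp
          qed
          also have "\<dots> \<le> (1/2) * (dt / s + \<epsilon> / s)"
          proof -
            have q1: "norm (X t - p) = dt" using p(2) by (simp add: dist_norm)
            have q2: "norm E / s \<le> \<epsilon> / s" by (rule divide_right_mono[OF E]) (use s0 in simp)
            show ?thesis unfolding q1 using q2 by (intro mult_left_mono add_left_mono) auto
          qed
          finally have nv1: "norm V \<le> (1/2) * (dt / s + \<epsilon> / s)" .
          have "u * norm V \<le> u * ((1/2) * (dt / s + \<epsilon> / s))"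
            by (rule mult_left_mono[OF nv1]) (use u0 in simp)
          also have "\<dots> = lam * dt + lam * \<epsilon>" unfolding lam_def by (simp add: field_simps)
          finally show ?thesis .
        qed
        have dXy: "norm (X y - X 0) \<le> norm (X t - X 0) + \<eta> / 4 * u + u * norm V"
        proof -
          have "X y - X 0 = (X t - X 0) + (X y - X t - u *\<^sub>R V) + u *\<^sub>R V" by simp
          then have "norm (X y - X 0) \<le> norm (X t - X 0) + norm (X y - X t - u *\<^sub>R V) + norm (u *\<^sub>R V)"
          proof -
            have "norm ((X t - X 0) + (X y - X t - u *\<^sub>R V) + u *\<^sub>R V) \<le> norm ((X t - X 0) + (X y - X t - u *\<^sub>R V)) + norm (u *\<^sub>R V)"
              by (rule norm_triangle_ineq)
            moreover have "norm ((X t - X 0) + (X y - X t - u *\<^sub>R V)) \<le> norm (X t - X 0) + norm (X y - X t - u *\<^sub>R V)"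
              by (rule norm_triangle_ineq)
            moreover have "norm (X y - X 0) = norm ((X t - X 0) + (X y - X t - u *\<^sub>R V) + u *\<^sub>R V)"
              using \<open>X y - X 0 = _\<close> by (rule arg_cong)
            ultimately show ?thesis by linarith
          qed
          moreover have "norm (u *\<^sub>R V) = u * norm V" using u0 by simp
          ultimately show ?thesis using Rem by linarith
        qed
        have yeq: "y = t + u" using u_def by simp
        have c1: "infdist (X y) M - B y - \<eta> * y \<le> 0"
        proof -
          have e1: "(1 - lam) * (B t + \<eta> * t) = B t + \<eta> * t - lam * B t - lam * (\<eta> * t)" by (simp add: algebra_simps)
          have e2: "u * (B' - \<eta> / 4) = u * B' - \<eta> / 4 * u" by (simp add: algebra_simps)
          have e3: "\<eta> * y = \<eta> * t + \<eta> * u" unfolding yeq by (simp add: algebra_simps)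
          have "0 \<le> \<eta> * u" using eta u0 by simp
          then show ?thesis using dy By P1 P2 e1 e2 e3 uB by linarith
        qed
        have c2: "norm (X y - X 0) - A y - \<eta> * K * y \<le> 0"
        proof -
          have e1: "lam * (B t + \<eta> * t) = lam * B t + lam * (\<eta> * t)" by (simp add: algebra_simps)
          have e2: "u * (A' - \<eta> / 4) = u * A' - \<eta> / 4 * u" by (simp add: algebra_simps)
          have e3: "\<eta> * K * y = \<eta> * K * t + u * \<eta> * (K - 1/2) + \<eta> / 2 * u" unfolding yeq by (simp add: algebra_simps)
          show ?thesis using dXy Nt nV P3 P4 Ay e1 e2 e3 uA by linarith
        qed
        show "f y \<le> 0" unfolding f_def using c1 c2 by simp
      qed
    qed
    then have "f T \<le> 0" using T0 by simp
    then show ?thesis unfolding f_def by simp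
  qed
  have KT: "0 \<le> K * T" unfolding K_def using T0 tau by simp
  have normA: "norm (X T - X 0) \<le> A T"
  proof (rule field_le_epsilon)
    fix \<xi> :: real assume xi: "0 < \<xi>"
    define \<eta> where "\<eta> = min ((r - d0) / (2 * T)) (\<xi> / (K * T + 1))"
    have eta0: "0 < \<eta>" unfolding \<eta>_def using d0r T0 xi KT by simp
    have "\<eta> * T \<le> (r - d0) / (2 * T) * T" unfolding \<eta>_def using T0 by (intro mult_right_mono) auto
    also have "\<dots> < r - d0" using T0 d0r by (simp add: field_simps)
    finally have etaT: "\<eta> * T < r - d0" .
    have "\<eta> * K * T = \<eta> * (K * T)" by simp
    also have "\<dots> \<le> \<xi> / (K * T + 1) * (K * T)" unfolding \<eta>_def using KT by (intro mult_right_mono) auto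
    also have "\<dots> \<le> \<xi>" using KT xi by (simp add: field_simps)
    finally have "\<eta> * K * T \<le> \<xi>" .
    then show "norm (X T - X 0) \<le> A T + \<xi>" using key[OF eta0 etaT] by linarith
  qed
  have AT: "A T \<le> d0 + \<epsilon> * ln (t0 / \<tau>)"
  proof -
    have tT: "t0 - T = \<tau>" unfolding T_def by simp
    have lnq: "ln (t0 / \<tau>) = ln t0 - ln \<tau>" using tau by (simp add: ln_div)
    have "A T = (d0 - \<epsilon>) - (d0 - \<epsilon>) * (sqrt \<tau> / sqrt t0) + \<epsilon> * ln (t0 / \<tau>)"
      unfolding A_def tT lnq by (simp add: algebra_simps)
    moreover have "0 \<le> (d0 - \<epsilon>) * (sqrt \<tau> / sqrt t0)" using epsd0 tau by (intro mult_nonneg_nonneg divide_nonneg_nonneg) auto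
    ultimately show ?thesis using eps0 by linarith
  qed
  show ?thesis using normA AT unfolding \<epsilon>_def d0_def T_def by simp
qed

theorem lemmaG1:
  shows "\<exists>C::real. \<forall>(M :: (real^'n) set) r \<tau> t0
      (shat :: real^'n \<Rightarrow> real \<Rightarrow> real^'n) (e :: real^'n \<Rightarrow> real \<Rightarrow> real^'n)
      (X :: real \<Rightarrow> real^'n).
    closed M \<and> embedded_submanifold M \<and>
    0 < \<tau> \<and> \<tau> < t0 \<and>
    0 < r \<and> ereal r < reach M \<and>
    (\<forall>t\<in>{\<tau>..t0}. \<forall>x\<in>tube r M.
        shat x t = - ((x - nearest_proj M x) /\<^sub>R t) + e x t /\<^sub>R t) \<and>
    bdd_above ((\<lambda>(x, t). norm (e x t)) ` (tube r M \<times> {\<tau>..t0})) \<and>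
    (\<forall>t\<in>{0..t0 - \<tau>}.
        (X has_vector_derivative ((1/2) *\<^sub>R shat (X t) (t0 - t))) (at t within {0..t0 - \<tau>})) \<and>
    X 0 \<in> tube r M \<and>
    sqrt ((1/2) * (infdist (X 0) M)\<^sup>2)
        \<ge> (SUP (x, t) \<in> tube r M \<times> {\<tau>..t0}. norm (e x t))
    \<longrightarrow> norm (X (t0 - \<tau>) - X 0)
        \<le> infdist (X 0) M + C * ((SUP (x, t) \<in> tube r M \<times> {\<tau>..t0}. norm (e x t)) * ln (t0 / \<tau>))"
  apply (rule exI[of _ 1])
  apply (intro allI impI)
  apply (elim conjE)
  apply (rule main_bound)
  apply assumption+
  done

end
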